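(* Let $(X,T)$ be a topological dynamical system and $c_S^n$ a system of coefficients for which the limits defining $\operatorname{Asc}$ and $\operatorname{Int}$ exist. For each open cover $\mathscr U$ of $X$, $\operatorname{Asc}(X,\mathscr U,T)\le h_{\mathrm{top}}(X,T)$, and moreover $\operatorname{Int}(X,\mathscr U,T)\le h_{\mathrm{top}}(X,\mathscr U,T)\le h_{\mathrm{top}}(X,T)$.
   Context: A system of coefficients is a family $\{c_S^n:n\in\mathbb N,S\subset n^*\}$ with $c_S^n\ge0$, $\sum_{S\subset n^*}c_S^n=1$, $c_{S^c}^n=c_S^n$, where $n^*=\{0,\dots,n-1\}$, $S^c=n^*\setminus S$ (the limits below exist e.g. when $c_S^n=\int x^{|S|}(1-x)^{n-|S|}\lambda(dx)$ for a symmetric probability measure $\lambda$ on $[0,1]$). $(X,T)$: compact Hausdorff, $T$ continuous; $\mathscr U_S=\bigvee_{i\in S}T^{-i}\mathscr U$; $N$ = minimal subcover cardinality. $\operatorname{Asc}(X,\mathscr U,T)=\lim_n\frac1n\sum_Sc_S^n\log N(\mathscr U_S)$, $\operatorname{Int}(X,\mathscr U,T)=\lim_n\frac1n\sum_Sc_S^n\log\frac{N(\mathscr U_S)N(\mathscr U_{S^c})}{N(\mathscr U_{n^*})}$, $h_{\mathrm{top}}(X,\mathscr U,T)=\lim_n\frac1n\log N(\mathscr U_{n^*})$, $h_{\mathrm{top}}(X,T)=\sup_{\mathscr U}h_{\mathrm{top}}(X,\mathscr U,T)$. *)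

theory Defs
  imports "HOL-Analysis.Analysis"
begin

definition tds :: "'a topology \<Rightarrow> ('a \<Rightarrow> 'a) \<Rightarrow> bool" where
  "tds X T \<longleftrightarrow> compact_space X \<and> Hausdorff_space X \<and> continuous_map X X T"

definition open_cover :: "'a topology \<Rightarrow> 'a set set \<Rightarrow> bool" where
  "open_cover X \<U> \<longleftrightarrow> (\<forall>U\<in>\<U>. openin X U) \<and> \<Union>\<U> = topspace X"

text \<open>The join of the covers T^{-i} U for i in S (the trivial cover {X} if S is empty).\<close>
definition join_cover :: "'a topology \<Rightarrow> ('a \<Rightarrow> 'a) \<Rightarrow> 'a set set \<Rightarrow> nat set \<Rightarrow> 'a set set" where
  "join_cover X T \<U> S =
     {topspace X \<inter> (\<Inter>i\<in>S. (T ^^ i) -` f i) | f. \<forall>i\<in>S. f i \<in> \<U>}"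

definition cover_number :: "'a topology \<Rightarrow> 'a set set \<Rightarrow> nat" where
  "cover_number X \<V> = Inf {card \<W> | \<W>. \<W> \<subseteq> \<V> \<and> finite \<W> \<and> topspace X \<subseteq> \<Union>\<W>}"

text \<open>System of coefficients c n S for S a subset of n* = {0..<n}.\<close>
definition coeff_system :: "(nat \<Rightarrow> nat set \<Rightarrow> real) \<Rightarrow> bool" where
  "coeff_system c \<longleftrightarrow>
     (\<forall>n\<ge>1. (\<forall>S\<subseteq>{..<n}. c n S \<ge> 0 \<and> c n ({..<n} - S) = c n S)
            \<and> (\<Sum>S\<in>Pow {..<n}. c n S) = 1)"

definition asc_seq :: "(nat \<Rightarrow> nat set \<Rightarrow> real) \<Rightarrow> 'a topology \<Rightarrow> 'a set set \<Rightarrow> ('a \<Rightarrow> 'a) \<Rightarrow> nat \<Rightarrow> real" where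
  "asc_seq c X \<U> T n =
     (1 / real n) * (\<Sum>S\<in>Pow {..<n}. c n S * ln (real (cover_number X (join_cover X T \<U> S))))"

definition int_seq :: "(nat \<Rightarrow> nat set \<Rightarrow> real) \<Rightarrow> 'a topology \<Rightarrow> 'a set set \<Rightarrow> ('a \<Rightarrow> 'a) \<Rightarrow> nat \<Rightarrow> real" where
  "int_seq c X \<U> T n =
     (1 / real n) * (\<Sum>S\<in>Pow {..<n}. c n S *
        ln (real (cover_number X (join_cover X T \<U> S)) *
            real (cover_number X (join_cover X T \<U> ({..<n} - S))) /
            real (cover_number X (join_cover X T \<U> {..<n}))))"

definition Asc :: "(nat \<Rightarrow> nat set \<Rightarrow> real) \<Rightarrow> 'a topology \<Rightarrow> 'a set set \<Rightarrow> ('a \<Rightarrow> 'a) \<Rightarrow> real" where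
  "Asc c X \<U> T = lim (asc_seq c X \<U> T)"

definition Int_ent :: "(nat \<Rightarrow> nat set \<Rightarrow> real) \<Rightarrow> 'a topology \<Rightarrow> 'a set set \<Rightarrow> ('a \<Rightarrow> 'a) \<Rightarrow> real" where
  "Int_ent c X \<U> T = lim (int_seq c X \<U> T)"

definition htop_cover :: "'a topology \<Rightarrow> 'a set set \<Rightarrow> ('a \<Rightarrow> 'a) \<Rightarrow> real" where
  "htop_cover X \<U> T = lim (\<lambda>n. (1 / real n) * ln (real (cover_number X (join_cover X T \<U> {..<n}))))"

definition htop :: "'a topology \<Rightarrow> ('a \<Rightarrow> 'a) \<Rightarrow> ereal" where
  "htop X T = (SUP \<U>\<in>{\<U>. open_cover X \<U>}. ereal (htop_cover X \<U> T))"

end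

theory Submission
  imports Defs
begin

lemma cont_iter: "continuous_map X X T \<Longrightarrow> continuous_map X X (T ^^ i)"
  by (induction i) (auto intro: continuous_map_compose[of X X _ X T, simplified])

lemma join_open:
  assumes "continuous_map X X T" "open_cover X \<U>" "finite S" "A \<in> join_cover X T \<U> S"
  shows "openin X A"
proof -
  obtain f where A: "A = topspace X \<inter> (\<Inter>i\<in>S. (T ^^ i) -` f i)" and f: "\<forall>i\<in>S. f i \<in> \<U>"
    using assms(4) unfolding join_cover_def by blast
  have "openin X (topspace X \<inter> (T ^^ i) -` f i)" if "i \<in> S" for i
  proof -
    have "openin X {x \<in> topspace X. (T ^^ i) x \<in> f i}"
      using f assms(2) that cont_iter[OF assms(1)] unfolding open_cover_def
      by (intro openin_continuous_map_preimage) auto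
    moreover have "{x \<in> topspace X. (T ^^ i) x \<in> f i} = topspace X \<inter> (T ^^ i) -` f i" by auto
    ultimately show ?thesis by simp
  qed
  then have "openin X ((\<Inter>i\<in>S. topspace X \<inter> (T ^^ i) -` f i) \<inter> topspace X)"
    by (intro openin_INT[OF assms(3)])
  moreover have "A = (\<Inter>i\<in>S. topspace X \<inter> (T ^^ i) -` f i) \<inter> topspace X" using A by auto
  ultimately show ?thesis by simp
qed

lemma join_covers:
  assumes "continuous_map X X T" "open_cover X \<U>" "x \<in> topspace X"
  shows "x \<in> \<Union>(join_cover X T \<U> S)"
proof -
  have "\<forall>i. \<exists>U\<in>\<U>. (T ^^ i) x \<in> U"
  proof
    fix i
    have "(T ^^ i) x \<in> topspace X"
      using cont_iter[OF assms(1), of i] assms(3) by (simp add: continuous_map_def Pi_iff)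
    then show "\<exists>U\<in>\<U>. (T ^^ i) x \<in> U" using assms(2) unfolding open_cover_def by blast
  qed
  then obtain f where f: "\<forall>i. f i \<in> \<U> \<and> (T ^^ i) x \<in> f i" by metis
  then have "topspace X \<inter> (\<Inter>i\<in>S. (T ^^ i) -` f i) \<in> join_cover X T \<U> S"
    unfolding join_cover_def by blast
  then show ?thesis using f assms(3) by blast
qed

lemma cn_set_ne:
  assumes "tds X T" "open_cover X \<U>" "finite S"
  shows "{card \<W> | \<W>. \<W> \<subseteq> join_cover X T \<U> S \<and> finite \<W> \<and> topspace X \<subseteq> \<Union>\<W>} \<noteq> {}"
proof -
  have c: "compact_space X" "continuous_map X X T" using assms(1) unfolding tds_def by auto
  have "\<exists>\<F>. finite \<F> \<and> \<F> \<subseteq> join_cover X T \<U> S \<and> topspace X \<subseteq> \<Union>\<F>"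
  proof (rule c(1)[unfolded compact_space_alt, rule_format], rule conjI)
    show "\<forall>U\<in>join_cover X T \<U> S. openin X U" using join_open[OF c(2) assms(2) assms(3)] by blast
    show "topspace X \<subseteq> \<Union> (join_cover X T \<U> S)" using join_covers[OF c(2) assms(2)] by blast
  qed
  then show ?thesis by blast
qed

lemma cn_pos:
  assumes "tds X T" "open_cover X \<U>" "finite S" "topspace X \<noteq> {}"
  shows "cover_number X (join_cover X T \<U> S) \<ge> 1"
proof -
  let ?K = "{card \<W> | \<W>. \<W> \<subseteq> join_cover X T \<U> S \<and> finite \<W> \<and> topspace X \<subseteq> \<Union>\<W>}"
  have "Inf ?K \<in> ?K" by (rule Inf_nat_def1[OF cn_set_ne[OF assms(1-3)]])
  then obtain W where W1: "Inf ?K = card W" and W2: "finite W" and W3: "topspace X \<subseteq> \<Union>W"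
    by blast
  have "W \<noteq> {}" using assms(4) W3 by auto
  then have "card W \<ge> 1" using W2 by (simp add: Suc_le_eq card_gt_0_iff)
  then show ?thesis unfolding cover_number_def W1 .
qed

lemma cn_mono:
  assumes "tds X T" "open_cover X \<U>" "S \<subseteq> {..<n}"
  shows "cover_number X (join_cover X T \<U> S) \<le> cover_number X (join_cover X T \<U> {..<n})"
proof -
  let ?K = "{card \<W> | \<W>. \<W> \<subseteq> join_cover X T \<U> {..<n} \<and> finite \<W> \<and> topspace X \<subseteq> \<Union>\<W>}"
  let ?K' = "{card \<W> | \<W>. \<W> \<subseteq> join_cover X T \<U> S \<and> finite \<W> \<and> topspace X \<subseteq> \<Union>\<W>}"
  have "Inf ?K \<in> ?K" by (rule Inf_nat_def1[OF cn_set_ne[OF assms(1-2)]]) simp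
  then obtain W where W1: "Inf ?K = card W" and W2: "finite W" and W3: "topspace X \<subseteq> \<Union>W"
    and W4: "W \<subseteq> join_cover X T \<U> {..<n}" by blast
  define P where "P = (\<lambda>A f. (\<forall>i\<in>{..<n}. f i \<in> \<U>) \<and> A = topspace X \<inter> (\<Inter>i\<in>{..<n}. (T ^^ i) -` f i))"
  define g where "g = (\<lambda>A. topspace X \<inter> (\<Inter>i\<in>S. (T ^^ i) -` (SOME f. P A f) i))"
  have gA: "g A \<in> join_cover X T \<U> S \<and> A \<subseteq> g A" if "A \<in> W" for A
  proof -
    have ex: "\<exists>f. P A f" using W4 that unfolding join_cover_def P_def by blast
    define f where "f = (SOME f. P A f)"
    have PA: "P A f" unfolding f_def using ex by (rule someI_ex)
    have f1: "\<forall>i\<in>{..<n}. f i \<in> \<U>" using PA unfolding P_def by (rule conjunct1)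
    have f2: "A = topspace X \<inter> (\<Inter>i\<in>{..<n}. (T ^^ i) -` f i)" using PA unfolding P_def by (rule conjunct2)
    have "g A = topspace X \<inter> (\<Inter>i\<in>S. (T ^^ i) -` f i)" unfolding g_def f_def by simp
    moreover have "\<forall>i\<in>S. f i \<in> \<U>" using f1 assms(3) by blast
    ultimately have "g A \<in> join_cover X T \<U> S" unfolding join_cover_def by blast
    moreover have "A \<subseteq> g A"
    proof -
      have "topspace X \<inter> (\<Inter>i\<in>{..<n}. (T ^^ i) -` f i) \<subseteq> topspace X \<inter> (\<Inter>i\<in>S. (T ^^ i) -` f i)"
        using assms(3) by blast
      then show ?thesis using f2 \<open>g A = _\<close> by simp
    qed
    ultimately show ?thesis by blast
  qed
  have "g ` W \<subseteq> join_cover X T \<U> S" using gA by blast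
  moreover have "topspace X \<subseteq> \<Union>(g ` W)" using W3 gA by blast
  moreover have "finite (g ` W)" using W2 by simp
  ultimately have "card (g ` W) \<in> ?K'" by blast
  then have "Inf ?K' \<le> card (g ` W)" by (rule cInf_lower) simp
  also have "\<dots> \<le> card W" using W2 card_image_le by blast
  finally show ?thesis unfolding cover_number_def W1 .
qed

lemma cn_empty:
  assumes "topspace X = {}"
  shows "cover_number X V = 0"
proof -
  let ?K = "{card \<W> | \<W>. \<W> \<subseteq> V \<and> finite \<W> \<and> topspace X \<subseteq> \<Union>\<W>}"
  have "{} \<subseteq> V \<and> finite {} \<and> topspace X \<subseteq> \<Union>{}" using assms by simp
  then have "card ({}::'a set set) \<in> ?K" by blast
  then have "Inf ?K \<le> card ({}::'a set set)" by (rule cInf_lower) simp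
  then show ?thesis unfolding cover_number_def by simp
qed

theorem proposition2p10:
  fixes X :: "'a topology" and T :: "'a \<Rightarrow> 'a" and c :: "nat \<Rightarrow> nat set \<Rightarrow> real"
    and \<U> :: "'a set set"
  assumes "tds X T"
    and "coeff_system c"
    and "open_cover X \<U>"
    and "convergent (asc_seq c X \<U> T)"
    and "convergent (int_seq c X \<U> T)"
  shows "ereal (Asc c X \<U> T) \<le> htop X T
         \<and> Int_ent c X \<U> T \<le> htop_cover X \<U> T
         \<and> ereal (htop_cover X \<U> T) \<le> htop X T"
proof -
  define N where "N = (\<lambda>S. real (cover_number X (join_cover X T \<U> S)))"
  define h where "h = (\<lambda>n. (1 / real n) * ln (real (cover_number X (join_cover X T \<U> {..<n}))))"
  have Nmono: "ln (N S) \<le> ln (N {..<n})" if "S \<subseteq> {..<n}" for S n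
  proof (cases "topspace X = {}")
    case True
    then show ?thesis unfolding N_def by (simp add: cn_empty)
  next
    case False
    have "1 \<le> N S" unfolding N_def using cn_pos[OF assms(1,3) _ False] that
      by (simp add: finite_subset)
    then show ?thesis unfolding N_def using cn_mono[OF assms(1,3) that] by simp
  qed
  have Nsplit: "ln (N S * N ({..<n} - S) / N {..<n}) = ln (N S) + ln (N ({..<n} - S)) - ln (N {..<n})"
    if "S \<subseteq> {..<n}" for S n
  proof (cases "topspace X = {}")
    case True
    then show ?thesis unfolding N_def by (simp add: cn_empty)
  next
    case False
    have "1 \<le> N S" "1 \<le> N ({..<n} - S)" "1 \<le> N {..<n}" unfolding N_def
      using cn_pos[OF assms(1,3) _ False] that by (auto simp: finite_subset)
    then show ?thesis by (simp add: ln_mult ln_div)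
  qed
  have key: "int_seq c X \<U> T n = 2 * asc_seq c X \<U> T n - h n \<and> asc_seq c X \<U> T n \<le> h n" for n
  proof (cases "n = 0")
    case True
    then show ?thesis unfolding int_seq_def asc_seq_def h_def by simp
  next
    case False
    have co: "\<forall>S\<subseteq>{..<n}. c n S \<ge> 0 \<and> c n ({..<n} - S) = c n S" "(\<Sum>S\<in>Pow {..<n}. c n S) = 1"
      using assms(2) False unfolding coeff_system_def by auto
    have refl: "(\<Sum>S\<in>Pow {..<n}. c n S * ln (N ({..<n} - S))) = (\<Sum>S\<in>Pow {..<n}. c n S * ln (N S))"
    proof (rule sum.reindex_bij_witness[of _ "\<lambda>S. {..<n} - S" "\<lambda>S. {..<n} - S"])
      fix S assume S: "S \<in> Pow {..<n}"
      then show "{..<n} - ({..<n} - S) = S" "{..<n} - S \<in> Pow {..<n}" by auto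
      show "c n ({..<n} - S) * ln (N ({..<n} - S)) = c n S * ln (N ({..<n} - S))"
        using co(1) S by simp
    qed auto
    have "(\<Sum>S\<in>Pow {..<n}. c n S * ln (N S * N ({..<n} - S) / N {..<n}))
        = (\<Sum>S\<in>Pow {..<n}. c n S * ln (N S) + c n S * ln (N ({..<n} - S)) - c n S * ln (N {..<n}))"
      by (rule sum.cong) (simp_all add: Nsplit algebra_simps)
    also have "\<dots> = (\<Sum>S\<in>Pow {..<n}. c n S * ln (N S)) + (\<Sum>S\<in>Pow {..<n}. c n S * ln (N ({..<n} - S)))
          - (\<Sum>S\<in>Pow {..<n}. c n S * ln (N {..<n}))"
      by (simp add: sum.distrib sum_subtractf)
    also have "(\<Sum>S\<in>Pow {..<n}. c n S * ln (N {..<n})) = ln (N {..<n})"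
      using co(2) by (simp add: sum_distrib_right[symmetric])
    finally have e: "(\<Sum>S\<in>Pow {..<n}. c n S * ln (N S * N ({..<n} - S) / N {..<n}))
        = 2 * (\<Sum>S\<in>Pow {..<n}. c n S * ln (N S)) - ln (N {..<n})"
      using refl by simp
    have "(\<Sum>S\<in>Pow {..<n}. c n S * ln (N S)) \<le> (\<Sum>S\<in>Pow {..<n}. c n S * ln (N {..<n}))"
    proof (rule sum_mono)
      fix S assume S: "S \<in> Pow {..<n}"
      then have "c n S \<ge> 0" using co(1) by simp
      then show "c n S * ln (N S) \<le> c n S * ln (N {..<n})"
        using Nmono[of S n] S by (simp add: mult_left_mono)
    qed
    also have "\<dots> = ln (N {..<n})" using co(2) by (simp add: sum_distrib_right[symmetric])
    finally have le: "(\<Sum>S\<in>Pow {..<n}. c n S * ln (N S)) \<le> ln (N {..<n})" .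
    have i: "int_seq c X \<U> T n = (1 / real n) * (\<Sum>S\<in>Pow {..<n}. c n S * ln (N S * N ({..<n} - S) / N {..<n}))"
      unfolding int_seq_def N_def by simp
    have a: "asc_seq c X \<U> T n = (1 / real n) * (\<Sum>S\<in>Pow {..<n}. c n S * ln (N S))"
      unfolding asc_seq_def N_def by simp
    have hn: "h n = (1 / real n) * ln (N {..<n})" unfolding h_def N_def by simp
    have "int_seq c X \<U> T n = 2 * asc_seq c X \<U> T n - h n"
      unfolding i a hn e by (simp add: algebra_simps)
    moreover have "asc_seq c X \<U> T n \<le> h n"
      unfolding a hn using le by (simp add: divide_right_mono)
    ultimately show ?thesis by blast
  qed
  obtain a where a: "asc_seq c X \<U> T \<longlonglongrightarrow> a" using assms(4) convergent_def by blast
  obtain b where b: "int_seq c X \<U> T \<longlonglongrightarrow> b" using assms(5) convergent_def by blast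
  have hh: "h = (\<lambda>n. 2 * asc_seq c X \<U> T n - int_seq c X \<U> T n)"
  proof
    fix n show "h n = 2 * asc_seq c X \<U> T n - int_seq c X \<U> T n" using key[of n] by linarith
  qed
  have hl: "h \<longlonglongrightarrow> 2 * a - b" unfolding hh by (intro tendsto_intros a b)
  have A: "Asc c X \<U> T = a" unfolding Asc_def by (rule limI[OF a])
  have B: "Int_ent c X \<U> T = b" unfolding Int_ent_def by (rule limI[OF b])
  have "htop_cover X \<U> T = lim h" unfolding htop_cover_def h_def by simp
  then have H: "htop_cover X \<U> T = 2 * a - b" using limI[OF hl] by simp
  have "a \<le> 2 * a - b" by (rule LIMSEQ_le[OF a hl]) (use key in blast)
  then have ah: "a \<le> htop_cover X \<U> T" and bh: "b \<le> htop_cover X \<U> T" using H by linarith+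
  have Hle: "ereal (htop_cover X \<U> T) \<le> htop X T"
    unfolding htop_def by (rule SUP_upper) (simp add: assms(3))
  have "ereal a \<le> ereal (htop_cover X \<U> T)" using ah by simp
  then have "ereal (Asc c X \<U> T) \<le> htop X T" using Hle A by (metis order_trans)
  then show ?thesis using Hle B bh by simp
qed

end
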